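(* For $k\ge 3$ let $N_k(t)=\mathbb{E}[Z_k(t)]$ be the expected number of vertices of degree $k$ in a Random Apollonian Network after $t$ steps. For every $k \geq 3$ the limit $\lim_{t \to +\infty} \frac{N_k(t)}{t}$ exists. Writing $b_k=\lim_{t \to +\infty} \frac{N_k(t)}{t}$, we have $b_3=\frac{2}{5}$, $b_4=\frac{1}{5}$, $b_5=\frac{4}{35}$, and $b_k = \frac{24}{k(k+1)(k+2)}$ for $k\geq 6$. Furthermore, for all $k \geq 3$ (and all $t\ge 1$), $$ |N_k(t) - b_k t| \leq K, \quad\text{where } K=3.6.$$
   Context: A Random Apollonian Network (RAN) is generated as follows: start (at time $t=0$) with a single triangular face. At each step $t=1,2,\dots$, pick one of the current (bounded) triangular faces uniformly at random, insert a new vertex inside it, and connect it to the three vertices on the boundary of that face, subdividing the face into three new triangular faces. After $t$ steps there are $2t+1$ triangular faces. $Z_k(t)$ denotes the number of vertices of degree exactly $k$ after $t$ steps. *)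

theory Defs
  imports "HOL-Probability.Probability"
begin

text \<open>A state of the Random Apollonian Network: vertices are 0,...,nv-1;
  edges are 2-element vertex sets; faces are the current bounded triangular
  faces, each given as a 3-element vertex set.\<close>

record ran_state =
  nv :: nat
  edges :: "nat set set"
  faces :: "nat set set"

definition ran_init :: ran_state where
  "ran_init = \<lparr> nv = 3, edges = {{0,1},{0,2},{1,2}}, faces = {{0,1,2}} \<rparr>"

definition insert_in_face :: "ran_state \<Rightarrow> nat set \<Rightarrow> ran_state" where
  "insert_in_face s F =
     \<lparr> nv = Suc (nv s),
       edges = edges s \<union> (\<lambda>u. {nv s, u}) ` F,
       faces = (faces s - {F}) \<union> (\<lambda>u. insert (nv s) (F - {u})) ` F \<rparr>"

definition ran_step :: "ran_state \<Rightarrow> ran_state pmf" where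
  "ran_step s = map_pmf (insert_in_face s) (pmf_of_set (faces s))"

primrec ran :: "nat \<Rightarrow> ran_state pmf" where
  "ran 0 = return_pmf ran_init"
| "ran (Suc t) = bind_pmf (ran t) ran_step"

definition degree :: "ran_state \<Rightarrow> nat \<Rightarrow> nat" where
  "degree s x = card {e \<in> edges s. x \<in> e}"

definition Z :: "nat \<Rightarrow> ran_state \<Rightarrow> nat" where
  "Z k s = card {x \<in> {..<nv s}. degree s x = k}"

definition N :: "nat \<Rightarrow> nat \<Rightarrow> real" where
  "N k t = measure_pmf.expectation (ran t) (\<lambda>s. real (Z k s))"

end

theory Submission
  imports Defs
begin


definition good :: "nat \<Rightarrow> ran_state \<Rightarrow> bool" where
"good t s \<longleftrightarrow> nv s = t+3 \<and> finite (faces s) \<and> card (faces s) = 2*t+1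
  \<and> (\<forall>F\<in>faces s. F \<subseteq> {..<nv s} \<and> card F = 3)
  \<and> finite (edges s) \<and> (\<forall>e\<in>edges s. e \<subseteq> {..<nv s})
  \<and> (\<forall>x<nv s. degree s x = card {F\<in>faces s. x\<in>F} + (if x<3 then 1 else 0)
       \<and> degree s x \<le> t+2 \<and> (1 \<le> t \<longrightarrow> 3 \<le> degree s x))"

lemma inv_init: "good 0 ran_init"
proof -
  have e0: "{e\<in>edges ran_init. (0::nat)\<in>e} = {{0,1},{0,2}}" and e1: "{e\<in>edges ran_init. (1::nat)\<in>e} = {{0,1},{1,2}}"
     and e2: "{e\<in>edges ran_init. (2::nat)\<in>e} = {{0,2},{1,2}}" by (auto simp: ran_init_def)
  have d: "degree ran_init x = 2" if "x<3" for x
  proof -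
    have "x=0 \<or> x=1 \<or> x=2" using that by auto
    then show ?thesis unfolding degree_def
      by (elim disjE) (simp_all only: e0 e1 e2, simp_all add: card_insert_if insert_eq_iff)
  qed
  have f: "card {F\<in>faces ran_init. x\<in>F} = 1" if "x<3" for x
  proof -
    have "{F\<in>faces ran_init. x\<in>F} = {{0,1,2}}" using that unfolding ran_init_def by auto
    then show ?thesis by simp
  qed
  have "nv ran_init = 3" "finite (faces ran_init)" "card (faces ran_init) = 1"
    "\<forall>F\<in>faces ran_init. F \<subseteq> {..<3} \<and> card F = 3" "finite (edges ran_init)"
    "\<forall>e\<in>edges ran_init. e \<subseteq> {..<3}" by (auto simp: ran_init_def)
  then show ?thesis by (simp add: good_def d f)
qed


context
  fixes t s F
  assumes G: "good t s" and FF: "F \<in> faces s"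
begin

abbreviation "s' \<equiv> insert_in_face s F"
abbreviation "gg \<equiv> (\<lambda>u. insert (nv s) (F - {u}))"

lemma Fsub: "F \<subseteq> {..<(nv s)}" and cardF: "card F = 3"
  using G FF unfolding good_def by blast+

lemma finF: "finite F" using cardF by (metis card.infinite zero_neq_numeral)

lemma finfaces: "finite (faces s)" and finedges: "finite (edges s)"
  using G unfolding good_def by auto

lemma nF: "(nv s) \<notin> F" using Fsub by auto

lemma esub0: "\<forall>e\<in>edges s. e \<subseteq> {..<(nv s)}" using G unfolding good_def by blast

lemma fsub0: "\<forall>H\<in>faces s. H \<subseteq> {..<(nv s)}" using G unfolding good_def by blast

lemma nE: "e \<in> edges s \<Longrightarrow> (nv s) \<notin> e" using esub0 by blast

lemma nG: "H \<in> faces s \<Longrightarrow> (nv s) \<notin> H" using fsub0 by blast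

lemma fcpos: "x \<in> F \<Longrightarrow> 1 \<le> card {H\<in>faces s. x\<in>H}"
proof -
  assume "x \<in> F"
  then have "{H\<in>faces s. x\<in>H} \<noteq> {}" "finite {H\<in>faces s. x\<in>H}" using FF finfaces by auto
  then show ?thesis by (simp add: Suc_le_eq card_gt_0_iff)
qed


lemma gg_inj: "inj_on gg F"
proof (rule inj_onI)
  fix u v assume u: "u \<in> F" and v: "v \<in> F" and eq: "gg u = gg v"
  have a: "(nv s) \<notin> F - {u}" "(nv s) \<notin> F - {v}" using nF by simp_all
  have "F - {u} = gg u - {(nv s)}" using Diff_insert_absorb[OF a(1)] by (rule sym)
  also have "\<dots> = gg v - {(nv s)}" using eq by (rule arg_cong)
  also have "\<dots> = F - {v}" using Diff_insert_absorb[OF a(2)] .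
  finally have e: "F - {u} = F - {v}" .
  show "u = v"
  proof (rule ccontr)
    assume "u \<noteq> v"
    then have "u \<in> F - {v}" using u by blast
    then show False using e by blast
  qed
qed

lemma hh_inj: "inj_on (\<lambda>u. {(nv s),u}) F"
proof (rule inj_onI)
  fix u v assume u: "u \<in> F" and v: "v \<in> F" and eq: "{(nv s),u} = {(nv s),v}"
  have "u \<noteq> (nv s)" using u nF by blast
  have "u \<in> {(nv s),v}" using eq by blast
  then show "u = v" using \<open>u \<noteq> (nv s)\<close> by blast
qed

lemma nv': "nv s' = Suc (nv s)" by (simp add: insert_in_face_def)

lemma deg_old: assumes "x < (nv s)" shows "degree s' x = degree s x + (if x \<in> F then 1 else 0)"
proof -
  have eq: "{e\<in>edges s'. x\<in>e} = {e\<in>edges s. x\<in>e} \<union> (if x\<in>F then {{(nv s),x}} else {})"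
    using assms by (auto simp: insert_in_face_def)
  have nin: "{(nv s),x} \<notin> edges s" using nE by auto
  show ?thesis unfolding degree_def eq using finedges nin by auto
qed

lemma deg_n: "degree s' (nv s) = 3"
proof -
  have eq: "{e\<in>edges s'. (nv s)\<in>e} = (\<lambda>u. {(nv s),u}) ` F"
    using nE by (auto simp: insert_in_face_def)
  show ?thesis unfolding degree_def eq using card_image[OF hh_inj] cardF by simp
qed

lemma fc_old: assumes "x < (nv s)"
  shows "card {H\<in>faces s'. x\<in>H} = card {H\<in>faces s. x\<in>H} + (if x \<in> F then 1 else 0)"
proof (cases "x \<in> F")
  case True
  have eq: "{H\<in>faces s'. x\<in>H} = ({H\<in>faces s. x\<in>H} - {F}) \<union> gg ` (F - {x})"
    using assms True by (auto simp: insert_in_face_def)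
  have disj: "({H\<in>faces s. x\<in>H} - {F}) \<inter> gg ` (F - {x}) = {}" using nG by auto
  have c2: "card (gg ` (F - {x})) = 2"
    using card_image[OF inj_on_subset[OF gg_inj, of "F - {x}"]] cardF True finF by auto
  have c1: "card ({H\<in>faces s. x\<in>H} - {F}) = card {H\<in>faces s. x\<in>H} - 1"
    using True FF finfaces by (auto simp: card_Diff_singleton)
  have pos: "card {H\<in>faces s. x\<in>H} \<ge> 1"
    using True by (rule fcpos)
  show ?thesis unfolding eq using c1 c2 pos disj finfaces finF True
    by (subst card_Un_disjoint) auto
next
  case False
  have eq: "{H\<in>faces s'. x\<in>H} = {H\<in>faces s. x\<in>H}"
    using assms False by (auto simp: insert_in_face_def)
  show ?thesis using eq False by simp
qed

lemma fc_n: "card {H\<in>faces s'. (nv s)\<in>H} = 3"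
proof -
  have eq: "{H\<in>faces s'. (nv s)\<in>H} = gg ` F"
  proof
    show "{H\<in>faces s'. (nv s)\<in>H} \<subseteq> gg ` F"
      using nG unfolding insert_in_face_def by auto
    show "gg ` F \<subseteq> {H\<in>faces s'. (nv s)\<in>H}"
      unfolding insert_in_face_def by auto
  qed
  show ?thesis unfolding eq using card_image[OF gg_inj] cardF by simp
qed

lemma card_faces': "card (faces s') = 2 * Suc t + 1"
proof -
  have eq: "faces s' = (faces s - {F}) \<union> gg ` F" by (simp add: insert_in_face_def)
  have disj: "(faces s - {F}) \<inter> gg ` F = {}" using nG by blast
  have cf: "card (faces s) = 2*t+1" using G unfolding good_def by blast
  have c1: "card (faces s - {F}) = 2*t" using cf FF by (simp add: card_Diff_singleton)
  have c2: "card (gg ` F) = 3" using card_image[OF gg_inj] cardF by simp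
  have "card (faces s') = card (faces s - {F}) + card (gg ` F)"
    unfolding eq by (rule card_Un_disjoint) (use finfaces finF disj in auto)
  then show ?thesis using c1 c2 by simp
qed

lemma good_step: "good (Suc t) s'"
proof -
  have nvt: "(nv s) = t + 3" using G unfolding good_def by blast
  have ff: "finite (faces s')" using finfaces finF by (simp add: insert_in_face_def)
  have fsub: "\<forall>H\<in>faces s'. H \<subseteq> {..<nv s'} \<and> card H = 3"
  proof
    fix H assume H: "H \<in> faces s'"
    show "H \<subseteq> {..<nv s'} \<and> card H = 3"
    proof (cases "H \<in> faces s")
      case True
      then have h: "H \<subseteq> {..<(nv s)} \<and> card H = 3" using G unfolding good_def by blast
      have sub: "{..<(nv s)} \<subseteq> {..<nv s'}" unfolding nv' by auto
      have "H \<subseteq> {..<nv s'}" using subset_trans[OF conjunct1[OF h] sub] .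
      then show ?thesis using conjunct2[OF h] by (rule conjI)
    next
      case False
      then obtain u where u: "u \<in> F" "H = gg u" using H unfolding insert_in_face_def by auto
      have c2: "card (F - {u}) = 2" using u cardF finF by simp
      have "(nv s) \<notin> F - {u}" using nF by blast
      then have "card H = Suc (card (F - {u}))" using u finF by simp
      then have "card H = 3" using c2 by simp
      moreover have "H \<subseteq> {..<nv s'}" using u Fsub unfolding nv' by auto
      ultimately show ?thesis by simp
    qed
  qed
  have fe: "finite (edges s')" using finedges finF by (simp add: insert_in_face_def)
  have esub: "\<forall>e\<in>edges s'. e \<subseteq> {..<nv s'}"
  proof
    fix e assume "e \<in> edges s'"
    then have "e \<in> edges s \<or> (\<exists>u\<in>F. e = {(nv s),u})" by (auto simp: insert_in_face_def)
    moreover have sub: "{..<(nv s)} \<subseteq> {..<nv s'}" "(nv s) \<in> {..<nv s'}" by (auto simp: nv')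
    ultimately show "e \<subseteq> {..<nv s'}"
    proof (elim disjE)
      assume "e \<in> edges s"
      then have "e \<subseteq> {..<nv s}" using esub0 by blast
      then show ?thesis using sub(1) by (rule subset_trans)
    next
      assume "\<exists>u\<in>F. e = {nv s, u}"
      then obtain u where u: "u \<in> F" "e = {nv s, u}" by blast
      have "u < nv s" using u(1) Fsub by blast
      then show ?thesis using u(2) by (simp add: nv')
    qed
  qed
  have degs: "\<forall>x<nv s'. degree s' x = card {H\<in>faces s'. x\<in>H} + (if x<3 then 1 else 0)
       \<and> degree s' x \<le> Suc t+2 \<and> (1 \<le> Suc t \<longrightarrow> 3 \<le> degree s' x)"
  proof (intro allI impI)
    fix x assume x: "x < nv s'"
    show "degree s' x = card {H\<in>faces s'. x\<in>H} + (if x<3 then 1 else 0)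
       \<and> degree s' x \<le> Suc t+2 \<and> (1 \<le> Suc t \<longrightarrow> 3 \<le> degree s' x)"
    proof (cases "x = (nv s)")
      case True
      then have "\<not> x < 3" using nvt by simp
      then show ?thesis using deg_n fc_n True by simp
    next
      case False
      then have xn: "x < (nv s)" using x unfolding nv' by simp
      have allx: "\<forall>x<(nv s). degree s x = card {F\<in>faces s. x\<in>F} + (if x<3 then 1 else 0)
       \<and> degree s x \<le> t+2 \<and> (1 \<le> t \<longrightarrow> 3 \<le> degree s x)" using G unfolding good_def by blast
      have old: "degree s x = card {H\<in>faces s. x\<in>H} + (if x<3 then 1 else 0)"
        "degree s x \<le> t+2" "1 \<le> t \<longrightarrow> 3 \<le> degree s x"
        using allx xn by blast+
      have low: "3 \<le> degree s' x"
      proof (cases "1 \<le> t")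
        case True then show ?thesis using old deg_old[OF xn] by simp
      next
        case False
        then have t0: "t = 0" by simp
        have "F = {..<(nv s)}" using Fsub cardF nvt t0 by (intro card_subset_eq) auto
        then have xF: "x \<in> F" using xn by blast
        have "card {H\<in>faces s. x\<in>H} \<ge> 1" using xF by (rule fcpos)
        moreover have "x < 3" using xn nvt t0 by simp
        ultimately show ?thesis using old(1) deg_old[OF xn] xF by simp
      qed
      show ?thesis using old deg_old[OF xn] fc_old[OF xn] low by simp
    qed
  qed
  have cf: "card (faces s') = 2 * Suc t + 1" by (rule card_faces')
  have nvs: "nv s' = Suc t + 3" using nvt nv' by simp
  show ?thesis unfolding good_def
    using nvs ff cf fsub fe esub degs by blast
qed

end



definition Zr :: "nat \<Rightarrow> ran_state \<Rightarrow> real" where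
  "Zr k s = (\<Sum>x<nv s. of_bool (degree s x = k))"
definition Oc :: "nat \<Rightarrow> ran_state \<Rightarrow> real" where
  "Oc k s = (\<Sum>x<3. of_bool (degree s x = k))"

lemma Z_Zr: "real (Z k s) = Zr k s"
proof -
  have "{x \<in> {..<nv s}. degree s x = k} = {..<nv s} \<inter> {x. degree s x = k}" by blast
  then show ?thesis unfolding Z_def Zr_def by simp
qed

lemma step_sum:
  assumes G: "good t s" and FF: "F \<in> faces s" and k: "k \<ge> 1"
  shows "Zr k (insert_in_face s F) = Zr k s + of_bool (k = 3)
     + (\<Sum>x<nv s. of_bool (x \<in> F) * (of_bool (degree s x = k - 1) - of_bool (degree s x = k)))"
proof -
  have eqA: "(\<Sum>x<nv s. (of_bool (degree (insert_in_face s F) x = k) :: real)) =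
     (\<Sum>x<nv s. of_bool (degree s x = k) + of_bool (x \<in> F) * (of_bool (degree s x = k - 1) - of_bool (degree s x = k)))"
  proof (rule sum.cong[OF refl])
    fix x assume "x \<in> {..<nv s}"
    then have x: "x < nv s" by simp
    show "(of_bool (degree (insert_in_face s F) x = k) :: real) =
      of_bool (degree s x = k) + of_bool (x \<in> F) * (of_bool (degree s x = k - 1) - of_bool (degree s x = k))"
    proof (cases "x \<in> F")
      case True
      then have d: "degree (insert_in_face s F) x = degree s x + 1" using deg_old[OF G FF x] by simp
      have "(degree s x + 1 = k) = (degree s x = k - 1)" using k by arith
      then show ?thesis unfolding d using True by simp
    next
      case False
      then show ?thesis using deg_old[OF G FF x] by simp
    qed
  qed
  have eqB: "(of_bool (degree (insert_in_face s F) (nv s) = k) :: real) = of_bool (k = 3)"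
    using deg_n[OF G FF] by auto
  have "Zr k (insert_in_face s F) = (\<Sum>x<Suc (nv s). of_bool (degree (insert_in_face s F) x = k))"
    unfolding Zr_def nv'[OF G FF] ..
  also have "\<dots> = (\<Sum>x<nv s. of_bool (degree (insert_in_face s F) x = k)) + of_bool (k = 3)"
    using eqB by (simp only: sum.lessThan_Suc)
  also have "\<dots> = (\<Sum>x<nv s. of_bool (degree s x = k) + of_bool (x \<in> F) * (of_bool (degree s x = k - 1) - of_bool (degree s x = k))) + of_bool (k = 3)"
    using eqA by simp
  also have "\<dots> = Zr k s + (\<Sum>x<nv s. of_bool (x \<in> F) * (of_bool (degree s x = k - 1) - of_bool (degree s x = k))) + of_bool (k = 3)"
    unfolding Zr_def sum.distrib ..
  finally show ?thesis by simp
qed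

lemma deg_mul: "real d * of_bool (d = j) = real j * of_bool (d = j)"
  by auto

lemma sum_faces:
  assumes G: "good t s" and k: "k \<ge> 1"
  shows "(\<Sum>F\<in>faces s. Zr k (insert_in_face s F)) =
    real (card (faces s)) * (Zr k s + of_bool (k = 3))
    + (real (k - 1) * Zr (k - 1) s - real k * Zr k s - Oc (k - 1) s + Oc k s)"
proof -
  define h where "h x = (of_bool (degree s x = k - 1) - of_bool (degree s x = k) :: real)" for x
  have ff: "finite (faces s)" using G unfolding good_def by blast
  have n3: "3 \<le> nv s" using G unfolding good_def by simp
  have "(\<Sum>F\<in>faces s. Zr k (insert_in_face s F)) =
      (\<Sum>F\<in>faces s. (Zr k s + of_bool (k = 3)) + (\<Sum>x<nv s. of_bool (x \<in> F) * h x))"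
    using step_sum[OF G _ k] unfolding h_def by (intro sum.cong) auto
  also have "\<dots> = real (card (faces s)) * (Zr k s + of_bool (k = 3)) + (\<Sum>F\<in>faces s. \<Sum>x<nv s. of_bool (x \<in> F) * h x)"
    by (simp add: sum.distrib)
  also have "(\<Sum>F\<in>faces s. \<Sum>x<nv s. of_bool (x \<in> F) * h x) = (\<Sum>x<nv s. \<Sum>F\<in>faces s. of_bool (x \<in> F) * h x)"
    by (rule sum.swap)
  also have "\<dots> = (\<Sum>x<nv s. real (card {F\<in>faces s. x \<in> F}) * h x)"
  proof (rule sum.cong[OF refl])
    fix x
    have "{F\<in>faces s. x \<in> F} = faces s \<inter> {F. x \<in> F}" by blast
    then have "(\<Sum>F\<in>faces s. (of_bool (x \<in> F) :: real)) = real (card {F\<in>faces s. x \<in> F})"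
      using ff by simp
    then show "(\<Sum>F\<in>faces s. of_bool (x \<in> F) * h x) = real (card {F\<in>faces s. x \<in> F}) * h x"
      by (simp add: sum_distrib_right[symmetric])
  qed
  also have "\<dots> = (\<Sum>x<nv s. (real (degree s x) - of_bool (x < 3)) * h x)"
  proof (rule sum.cong[OF refl])
    fix x assume "x \<in> {..<nv s}"
    then have "degree s x = card {F\<in>faces s. x\<in>F} + (if x<3 then 1 else 0)"
      using G unfolding good_def by blast
    then show "real (card {F\<in>faces s. x \<in> F}) * h x = (real (degree s x) - of_bool (x < 3)) * h x"
      by simp
  qed
  also have "\<dots> = (\<Sum>x<nv s. real (k - 1) * of_bool (degree s x = k - 1) - real k * of_bool (degree s x = k))
      - (\<Sum>x<nv s. if x < 3 then h x else 0)"
    unfolding sum_subtractf[symmetric]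
    by (rule sum.cong[OF refl]) (simp add: h_def algebra_simps deg_mul)
  also have "(\<Sum>x<nv s. if x < 3 then h x else 0) = (\<Sum>x\<in>{x\<in>{..<nv s}. x < 3}. h x)"
    by (rule sum.inter_filter[symmetric]) simp
  also have "{x\<in>{..<nv s}. x < 3} = {..<3}" using n3 by auto
  also have "(\<Sum>x<3. h x) = Oc (k - 1) s - Oc k s"
    unfolding h_def Oc_def by (simp add: sum_subtractf)
  also have "(\<Sum>x<nv s. real (k - 1) * of_bool (degree s x = k - 1) - real k * of_bool (degree s x = k))
      = real (k - 1) * Zr (k - 1) s - real k * Zr k s"
    unfolding Zr_def by (simp add: sum_subtractf sum_distrib_left)
  finally show ?thesis by simp
qed

lemma faces_ne: "good t s \<Longrightarrow> faces s \<noteq> {}" and faces_fin: "good t s \<Longrightarrow> finite (faces s)"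
  and card_faces: "good t s \<Longrightarrow> card (faces s) = 2*t+1"
  unfolding good_def by auto

lemma exp_step:
  assumes G: "good t s" and k: "k \<ge> 1"
  shows "measure_pmf.expectation (ran_step s) (Zr k) =
    Zr k s + of_bool (k = 3)
    + (real (k - 1) * Zr (k - 1) s - real k * Zr k s - Oc (k - 1) s + Oc k s) / (2 * real t + 1)"
proof -
  have "measure_pmf.expectation (ran_step s) (Zr k) = (\<Sum>F\<in>faces s. Zr k (insert_in_face s F)) / real (card (faces s))"
    unfolding ran_step_def using faces_ne[OF G] faces_fin[OF G] by (simp add: integral_pmf_of_set)
  also have "\<dots> = Zr k s + of_bool (k = 3)
    + (real (k - 1) * Zr (k - 1) s - real k * Zr k s - Oc (k - 1) s + Oc k s) / (2 * real t + 1)" unfolding sum_faces[OF G k] card_faces[OF G]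
    by (simp add: field_simps)
  finally show ?thesis .
qed

lemma set_ran_step: "good t s \<Longrightarrow> set_pmf (ran_step s) = insert_in_face s ` faces s"
  unfolding ran_step_def using faces_ne faces_fin by (simp add: set_pmf_of_set)

lemma support: "finite (set_pmf (ran t)) \<and> (\<forall>s\<in>set_pmf (ran t). good t s)"
proof (induction t)
  case 0
  have "set_pmf (ran 0) = {ran_init}" by simp
  then show ?case using inv_init by simp
next
  case (Suc t)
  have gt: "good t s" if "s \<in> set_pmf (ran t)" for s using Suc that by blast
  have finT: "finite (set_pmf (ran t))" using Suc by blast
  have "set_pmf (ran (Suc t)) = (\<Union>s\<in>set_pmf (ran t). set_pmf (ran_step s))"
    by (simp add: set_bind_pmf)
  also have "\<dots> = (\<Union>s\<in>set_pmf (ran t). insert_in_face s ` faces s)"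
  proof (rule SUP_cong[OF refl])
    fix s assume "s \<in> set_pmf (ran t)"
    then show "set_pmf (ran_step s) = insert_in_face s ` faces s" using gt set_ran_step by blast
  qed
  finally have eq: "set_pmf (ran (Suc t)) = (\<Union>s\<in>set_pmf (ran t). insert_in_face s ` faces s)" .
  have fin: "finite (\<Union>s\<in>set_pmf (ran t). insert_in_face s ` faces s)"
  proof (rule finite_UN_I[OF finT])
    fix s assume "s \<in> set_pmf (ran t)"
    then have "finite (faces s)" using gt faces_fin by blast
    then show "finite (insert_in_face s ` faces s)" by (rule finite_imageI)
  qed
  have gd: "\<forall>s'\<in>(\<Union>s\<in>set_pmf (ran t). insert_in_face s ` faces s). good (Suc t) s'"
  proof
    fix s' assume "s' \<in> (\<Union>s\<in>set_pmf (ran t). insert_in_face s ` faces s)"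
    then obtain s F where sF: "s \<in> set_pmf (ran t)" "F \<in> faces s" "s' = insert_in_face s F" by blast
    then have "good t s" using gt by blast
    then show "good (Suc t) s'" using good_step sF(2,3) by simp
  qed
  have "finite (set_pmf (ran (Suc t)))" using fin eq by simp
  moreover have "\<forall>s\<in>set_pmf (ran (Suc t)). good (Suc t) s" using gd eq by simp
  ultimately show ?case by (rule conjI)
qed



abbreviation SS where "SS t \<equiv> set_pmf (ran t)"

definition EE :: "nat \<Rightarrow> (ran_state \<Rightarrow> real) \<Rightarrow> real" where
  "EE t f = (\<Sum>s\<in>SS t. pmf (ran t) s * f s)"

definition NO :: "nat \<Rightarrow> nat \<Rightarrow> real" where "NO k t = EE t (Oc k)"

lemma finSS: "finite (SS t)" using support by blast
lemma goodSS: "s \<in> SS t \<Longrightarrow> good t s" using support by blast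

lemma exp_EE: "measure_pmf.expectation (ran t) f = EE t f"
  unfolding EE_def by (subst integral_measure_pmf[OF finSS]) auto

lemma N_EE: "N k t = EE t (Zr k)"
  unfolding N_def Z_Zr exp_EE ..

lemma EE_mono: "(\<And>s. s \<in> SS t \<Longrightarrow> f s \<le> g s) \<Longrightarrow> EE t f \<le> EE t g"
  unfolding EE_def by (intro sum_mono mult_left_mono) auto

lemma EE_const: "EE t (\<lambda>_. c) = c"
proof -
  have "EE t (\<lambda>_. c) = (\<Sum>s\<in>SS t. pmf (ran t) s) * c" unfolding EE_def by (simp add: sum_distrib_right)
  also have "(\<Sum>s\<in>SS t. pmf (ran t) s) = 1" by (rule sum_pmf_eq_1[OF finSS]) simp
  finally show ?thesis by simp
qed

lemma EE_bounds: "(\<And>s. s \<in> SS t \<Longrightarrow> a \<le> f s \<and> f s \<le> b) \<Longrightarrow> a \<le> EE t f \<and> EE t f \<le> b"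
proof -
  assume h: "\<And>s. s \<in> SS t \<Longrightarrow> a \<le> f s \<and> f s \<le> b"
  have "EE t (\<lambda>_. a) \<le> EE t f" using h by (intro EE_mono) auto
  moreover have "EE t f \<le> EE t (\<lambda>_. b)" using h by (intro EE_mono) auto
  ultimately show ?thesis unfolding EE_const by simp
qed

lemma rec:
  assumes k: "k \<ge> 1"
  shows "N k (Suc t) = N k t + of_bool (k = 3)
    + (real (k - 1) * N (k - 1) t - real k * N k t - NO (k - 1) t + NO k t) / (2 * real t + 1)"
proof -
  define d where "d = 2 * real t + 1"
  have dnz: "d \<noteq> 0" unfolding d_def by simp
  have fs: "finite (set_pmf (ran_step s))" if "s \<in> SS t" for s
    using set_ran_step[OF goodSS[OF that]] faces_fin[OF goodSS[OF that]] by simp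
  have "N k (Suc t) = measure_pmf.expectation (ran t \<bind> ran_step) (Zr k)"
    unfolding N_def Z_Zr by simp
  also have "\<dots> = (\<Sum>s\<in>SS t. pmf (ran t) s *\<^sub>R measure_pmf.expectation (ran_step s) (Zr k))"
    by (rule pmf_expectation_bind[OF finSS fs]) auto
  also have "\<dots> = (\<Sum>s\<in>SS t. pmf (ran t) s * (Zr k s + of_bool (k = 3)
    + (real (k - 1) * Zr (k - 1) s - real k * Zr k s - Oc (k - 1) s + Oc k s) / d))"
    unfolding d_def by (intro sum.cong refl) (simp add: exp_step[OF goodSS k])
  also have "\<dots> = (\<Sum>s\<in>SS t. pmf (ran t) s * Zr k s + of_bool (k = 3) * pmf (ran t) s
      + (real (k - 1) / d) * (pmf (ran t) s * Zr (k - 1) s) - (real k / d) * (pmf (ran t) s * Zr k s)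
      - (1 / d) * (pmf (ran t) s * Oc (k - 1) s) + (1 / d) * (pmf (ran t) s * Oc k s))"
    using dnz by (intro sum.cong refl) (simp add: field_simps)
  also have "\<dots> = EE t (Zr k) + of_bool (k = 3) * EE t (\<lambda>_. 1)
      + (real (k - 1) / d) * EE t (Zr (k - 1)) - (real k / d) * EE t (Zr k)
      - (1 / d) * EE t (Oc (k - 1)) + (1 / d) * EE t (Oc k)"
    unfolding EE_def by (simp add: sum.distrib sum_subtractf sum_distrib_left)
  also have "\<dots> = N k t + of_bool (k = 3)
    + (real (k - 1) * N (k - 1) t - real k * N k t - NO (k - 1) t + NO k t) / d"
    unfolding N_EE NO_def EE_const using dnz by (simp add: field_simps)
  finally show ?thesis unfolding d_def .
qed

lemma Oc_bounds: "0 \<le> Oc k s \<and> Oc k s \<le> 3"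
proof -
  have "Oc k s \<le> (\<Sum>x<3::nat. 1)" unfolding Oc_def by (intro sum_mono) simp
  then show ?thesis unfolding Oc_def by (simp add: sum_nonneg)
qed

lemma Oc_le_Zr: "good t s \<Longrightarrow> Oc k s \<le> Zr k s"
proof -
  assume G: "good t s"
  then have "3 \<le> nv s" unfolding good_def by simp
  then have "{..<3} \<subseteq> {..<nv s}" by auto
  then show ?thesis unfolding Oc_def Zr_def by (intro sum_mono2) auto
qed

lemma Zr_zero_big: "good t s \<Longrightarrow> t + 2 < k \<Longrightarrow> Zr k s = 0"
proof -
  assume G: "good t s" and k: "t + 2 < k"
  have "\<forall>x<nv s. degree s x \<le> t+2" using G unfolding good_def by blast
  then have "\<forall>x\<in>{..<nv s}. (of_bool (degree s x = k) :: real) = 0" using k by force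
  then show ?thesis unfolding Zr_def by simp
qed

lemma Zr_zero_small: "good t s \<Longrightarrow> 1 \<le> t \<Longrightarrow> k < 3 \<Longrightarrow> Zr k s = 0"
proof -
  assume G: "good t s" and t: "1 \<le> t" and k: "k < 3"
  have "\<forall>x<nv s. 3 \<le> degree s x" using G t unfolding good_def by blast
  then have "\<forall>x\<in>{..<nv s}. (of_bool (degree s x = k) :: real) = 0" using k by force
  then show ?thesis unfolding Zr_def by simp
qed

lemma good_deg: "good t s \<Longrightarrow> x < nv s \<Longrightarrow> degree s x \<le> t+2 \<and> (1\<le>t \<longrightarrow> 3 \<le> degree s x)"
  unfolding good_def by blast

lemma Zr_3_1: "good 1 s \<Longrightarrow> Zr 3 s = 4"
proof -
  assume G: "good 1 s"
  have nv: "nv s = 4" using G unfolding good_def by simp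
  have "\<forall>x\<in>{..<nv s}. (of_bool (degree s x = 3) :: real) = 1"
  proof
    fix x assume "x \<in> {..<nv s}"
    then have "degree s x \<le> 1+2 \<and> (1\<le>(1::nat) \<longrightarrow> 3 \<le> degree s x)" using good_deg[OF G] by simp
    then show "(of_bool (degree s x = 3) :: real) = 1" by simp
  qed
  then have "Zr 3 s = (\<Sum>x<nv s. (1::real))" unfolding Zr_def by (intro sum.cong) auto
  then show ?thesis using nv by simp
qed

lemma NO_bounds: "0 \<le> NO k t \<and> NO k t \<le> 3"
  unfolding NO_def by (rule EE_bounds) (rule Oc_bounds)

lemma NO_le_N: "NO k t \<le> N k t"
  unfolding NO_def N_EE by (rule EE_mono) (rule Oc_le_Zr[OF goodSS])

lemma N_big: "t + 2 < k \<Longrightarrow> N k t = 0"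
proof -
  assume k: "t + 2 < k"
  have "EE t (Zr k) = EE t (\<lambda>_. 0)" unfolding EE_def
    by (intro sum.cong refl) (simp add: Zr_zero_big[OF goodSS k])
  then show ?thesis unfolding N_EE EE_const .
qed

lemma N_small: "1 \<le> t \<Longrightarrow> k < 3 \<Longrightarrow> N k t = 0"
proof -
  assume t: "1 \<le> t" and k: "k < 3"
  have "EE t (Zr k) = EE t (\<lambda>_. 0)" unfolding EE_def
    by (intro sum.cong refl) (simp add: Zr_zero_small[OF goodSS t k])
  then show ?thesis unfolding N_EE EE_const .
qed

lemma N_3_1: "N 3 1 = 4"
proof -
  have "EE 1 (Zr 3) = EE 1 (\<lambda>_. 4)" unfolding EE_def
    by (intro sum.cong refl) (simp add: Zr_3_1[OF goodSS])
  then show ?thesis unfolding N_EE EE_const .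
qed



definition bb :: "nat \<Rightarrow> real" where "bb k = 24 / (real k * (real k + 1) * (real k + 2))"

lemma bb_pos: "k \<ge> 1 \<Longrightarrow> 0 < bb k"
  unfolding bb_def by simp

lemma bb_le: assumes "k \<ge> 3" shows "bb k \<le> 2/5"
proof -
  have k: "real k \<ge> 3" using assms by simp
  have "(3::real) * 4 * 5 \<le> real k * (real k + 1) * (real k + 2)"
    using k by (intro mult_mono) auto
  then show ?thesis unfolding bb_def by (simp add: divide_le_eq)
qed

lemma bb_rec: assumes "k \<ge> 2" shows "real (k - 1) * bb (k - 1) = (real k + 2) * bb k"
proof -
  have e: "real (k - 1) = real k - 1" using assms by simp
  have k: "real k \<ge> 2" using assms by simp
  define x where "x = real k"
  have nz: "x - 1 \<noteq> 0" "x \<noteq> 0" "x + 1 \<noteq> 0" "x + 2 \<noteq> 0" using k unfolding x_def by auto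
  have "(x - 1) * (24 / ((x - 1) * (x - 1 + 1) * (x - 1 + 2))) = (x - 1) * (24 / ((x - 1) * (x * (x + 1))))"
    by (simp add: algebra_simps)
  also have "\<dots> = 24 / (x * (x + 1))"
    using nz(1) by (metis mult_divide_mult_cancel_left times_divide_eq_right)
  finally have "(x - 1) * (24 / ((x - 1) * (x - 1 + 1) * (x - 1 + 2))) = 24 / (x * (x + 1))" .
  moreover have "(x + 2) * (24 / (x * (x + 1) * (x + 2))) = 24 / (x * (x + 1))"
  proof -
    have "(x + 2) * (24 / (x * (x + 1) * (x + 2))) = (x + 2) * (24 / ((x + 2) * (x * (x + 1))))"
      by (simp add: algebra_simps)
    also have "\<dots> = 24 / (x * (x + 1))"
      using nz(4) by (metis mult_divide_mult_cancel_left times_divide_eq_right)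
    finally show ?thesis .
  qed
  ultimately show ?thesis unfolding bb_def e x_def[symmetric] using k by (simp add: x_def)
qed

lemma bb_T: assumes "k \<ge> 4" "real k \<ge> x" "x \<ge> 0" shows "bb k * x \<le> 1"
proof -
  have k: "real k \<ge> 4" using assms by simp
  define P where "P = real k * (real k + 1) * (real k + 2)"
  have "(5::real) * 6 \<le> (real k + 1) * (real k + 2)"
    using k by (intro mult_mono) auto
  then have "real k * 30 \<le> real k * ((real k + 1) * (real k + 2))"
    using k by (intro mult_left_mono) auto
  then have "30 * x \<le> P" using assms(2,3) unfolding P_def by (simp add: algebra_simps)
  moreover have "P > 0" unfolding P_def using k by simp
  ultimately show ?thesis unfolding bb_def P_def[symmetric] using assms(3) by (simp add: pos_divide_le_eq)
qed

lemma alg: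
  fixes d T Nk Nk' Np Q Qp bk bp kk :: real
  assumes d: "d = 2 * T + 1" "d \<noteq> 0"
    and r: "Nk' = Nk + ((kk - 1) * Np - kk * Nk - Qp + Q) / d"
    and bi: "(kk - 1) * bp = (kk + 2) * bk"
  shows "Nk' - bk * (T + 1) = (1 - kk / d) * (Nk - bk * T) + ((kk - 1) / d) * (Np - bp * T) + (Q - Qp - bk) / d"
proof -
  have "d * (Nk' - bk * (T + 1)) = d * ((1 - kk / d) * (Nk - bk * T) + ((kk - 1) / d) * (Np - bp * T) + (Q - Qp - bk) / d)"
  proof -
    have "d * Nk' = d * Nk + ((kk - 1) * Np - kk * Nk - Qp + Q)" using r d(2) by (simp add: field_simps)
    moreover have "d * ((1 - kk / d) * (Nk - bk * T) + ((kk - 1) / d) * (Np - bp * T) + (Q - Qp - bk) / d)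
       = (d - kk) * (Nk - bk * T) + (kk - 1) * (Np - bp * T) + (Q - Qp - bk)" using d(2) by (simp add: field_simps)
    ultimately show ?thesis using bi d(1) by algebra
  qed
  then show ?thesis using d(2) by simp
qed

lemma step_bound:
  fixes e ep a C :: real and kk d :: real
  assumes "d > 0" "kk \<le> d" "kk \<ge> 1" "\<bar>e\<bar> \<le> C" "\<bar>ep\<bar> \<le> C" "\<bar>a\<bar> \<le> C"
  shows "\<bar>(1 - kk / d) * e + ((kk - 1) / d) * ep + a / d\<bar> \<le> C"
proof -
  have al: "0 \<le> 1 - kk / d" using assms by (simp add: field_simps)
  have be: "0 \<le> (kk - 1) / d" using assms by simp
  have "\<bar>(1 - kk / d) * e + ((kk - 1) / d) * ep + a / d\<bar> \<le> (1 - kk / d) * \<bar>e\<bar> + ((kk - 1) / d) * \<bar>ep\<bar> + \<bar>a\<bar> / d"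
  proof -
    have t1: "\<bar>(1 - kk / d) * e + ((kk - 1) / d) * ep + a / d\<bar> \<le> \<bar>(1 - kk / d) * e\<bar> + \<bar>((kk - 1) / d) * ep\<bar> + \<bar>a / d\<bar>"
      by (rule order_trans[OF abs_triangle_ineq add_right_mono[OF abs_triangle_ineq]])
    have q1: "\<bar>(1 - kk / d) * e\<bar> = (1 - kk / d) * \<bar>e\<bar>" using al by (simp only: abs_mult abs_of_nonneg)
    have q2: "\<bar>((kk - 1) / d) * ep\<bar> = ((kk - 1) / d) * \<bar>ep\<bar>" using be by (simp only: abs_mult abs_of_nonneg)
    have q3: "\<bar>a / d\<bar> = \<bar>a\<bar> / d" using assms(1) by simp
    show ?thesis using t1 unfolding q1 q2 q3 .
  qed
  also have "\<dots> \<le> (1 - kk / d) * C + ((kk - 1) / d) * C + C / d"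
    using al be assms by (intro add_mono mult_left_mono divide_right_mono) auto
  also have "\<dots> = C" using assms(1) by (simp add: field_simps)
  finally show ?thesis .
qed

lemma alg3:
  fixes d T Nk Nk' Q :: real
  assumes d: "d = 2 * T + 1" "d \<noteq> 0"
    and r: "Nk' = Nk + 1 + (- 3 * Nk + Q) / d"
  shows "Nk' - 2/5 * (T + 1) = (1 - 3 / d) * (Nk - 2/5 * T) + ((3 - 1) / d) * 0 + (3/5 + Q) / d"
proof -
  have A: "d * Nk' = d * Nk + d + (- 3 * Nk + Q)" using r d(2) by (simp add: field_simps)
  have B: "d * ((1 - 3 / d) * (Nk - 2/5 * T) + ((3 - 1) / d) * 0 + (3/5 + Q) / d) = (d - 3) * (Nk - 2/5 * T) + (3/5 + Q)"
    using d(2) by (simp add: field_simps)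
  have "d * (Nk' - 2/5 * (T + 1)) = d * ((1 - 3 / d) * (Nk - 2/5 * T) + ((3 - 1) / d) * 0 + (3/5 + Q) / d)"
    unfolding B using A d(1) by algebra
  then show ?thesis using d(2) by simp
qed

lemma main_bound: "\<forall>k\<ge>3. \<bar>N k (Suc t) - bb k * real (Suc t)\<bar> \<le> 18/5"
proof (induction t)
  case 0
  show ?case
  proof (intro allI impI)
    fix k :: nat assume k: "k \<ge> 3"
    show "\<bar>N k (Suc 0) - bb k * real (Suc 0)\<bar> \<le> 18/5"
    proof (cases "k = 3")
      case True
      then show ?thesis using N_3_1 by (simp add: bb_def)
    next
      case False
      then have "1 + 2 < k" using k by simp
      then have "N k 1 = 0" by (rule N_big)
      then show ?thesis using bb_pos[of k] bb_le[OF k] k by simp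
    qed
  qed
next
  case (Suc t)
  define T where "T = Suc t"
  have IH: "\<forall>k\<ge>3. \<bar>N k T - bb k * real T\<bar> \<le> 18/5" using Suc unfolding T_def .
  have T1: "1 \<le> T" unfolding T_def by simp
  define d where "d = 2 * real T + 1"
  have dpos: "d > 0" and dnz: "d \<noteq> 0" unfolding d_def by simp_all
  have "\<forall>k\<ge>3. \<bar>N k (Suc T) - bb k * real (Suc T)\<bar> \<le> 18/5"
  proof (intro allI impI)
    fix k :: nat assume k: "k \<ge> 3"
    show "\<bar>N k (Suc T) - bb k * real (Suc T)\<bar> \<le> 18/5"
    proof (cases "k \<le> 2 * T + 1")
      case True
      then have kd: "real k \<le> d" unfolding d_def by simp
      show ?thesis
      proof (cases "k = 3")
        case k3: True
        have r: "N 3 (Suc T) = N 3 T + 1 + (real 2 * N 2 T - real 3 * N 3 T - NO 2 T + NO 3 T) / d"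
          using rec[of 3 T] unfolding d_def by simp
        have N2: "N 2 T = 0" using N_small[OF T1] by simp
        have NO2: "NO 2 T = 0" using NO_bounds[of 2 T] NO_le_N[of 2 T] N2 by simp
        have r': "N 3 (Suc T) = N 3 T + 1 + (- 3 * N 3 T + NO 3 T) / d" using r N2 NO2 by simp
        have e: "N 3 (Suc T) - 2/5 * (real T + 1) = (1 - 3 / d) * (N 3 T - 2/5 * real T) + ((3 - 1) / d) * 0 + (3/5 + NO 3 T) / d"
          by (rule alg3[OF _ dnz r']) (simp add: d_def)
        have b3: "bb 3 = 2/5" by (simp add: bb_def)
        have bnd3: "\<bar>(1 - 3 / d) * (N 3 T - 2/5 * real T) + ((3 - 1) / d) * 0 + (3/5 + NO 3 T) / d\<bar> \<le> 18/5"
        proof (rule step_bound[OF dpos])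
          show "3 \<le> d" using T1 unfolding d_def by simp
          show "\<bar>N 3 T - 2 / 5 * real T\<bar> \<le> 18 / 5" using IH[rule_format, of 3] b3 by simp
          show "\<bar>3 / 5 + NO 3 T\<bar> \<le> 18 / 5" using NO_bounds[of 3 T] by simp
        qed simp_all
        have eq': "bb 3 * real (Suc T) = 2/5 * (real T + 1)" unfolding b3 by simp
        show ?thesis unfolding k3 eq' e by (rule bnd3)
      next
        case False
        then have k4: "k \<ge> 4" using k by simp
        have rk: "N k (Suc T) = N k T + ((real k - 1) * N (k - 1) T - real k * N k T - NO (k - 1) T + NO k T) / d"
          using rec[of k T] k4 unfolding d_def by (simp add: of_nat_diff)
        have bi: "(real k - 1) * bb (k - 1) = (real k + 2) * bb k"
          using bb_rec[of k] k4 by (simp add: of_nat_diff)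
        have e: "N k (Suc T) - bb k * (real T + 1) = (1 - real k / d) * (N k T - bb k * real T)
           + ((real k - 1) / d) * (N (k - 1) T - bb (k - 1) * real T) + (NO k T - NO (k - 1) T - bb k) / d"
          by (rule alg[OF _ dnz rk bi]) (simp add: d_def)
        have bndk: "\<bar>(1 - real k / d) * (N k T - bb k * real T)
           + ((real k - 1) / d) * (N (k - 1) T - bb (k - 1) * real T) + (NO k T - NO (k - 1) T - bb k) / d\<bar> \<le> 18/5"
        proof (rule step_bound[OF dpos kd])
          show "1 \<le> real k" using k by simp
          show "\<bar>N k T - bb k * real T\<bar> \<le> 18 / 5" using IH k by blast
          show "\<bar>N (k - 1) T - bb (k - 1) * real T\<bar> \<le> 18 / 5" using IH k4 by simp
          show "\<bar>NO k T - NO (k - 1) T - bb k\<bar> \<le> 18 / 5"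
            using NO_bounds[of k T] NO_bounds[of "k - 1" T] bb_pos[of k] bb_le[OF k] k unfolding abs_le_iff by linarith
        qed
        have eq': "bb k * real (Suc T) = bb k * (real T + 1)" by simp
        show ?thesis unfolding eq' e by (rule bndk)
      qed
    next
      case False
      then have k4: "k \<ge> 4" using T1 by simp
      show ?thesis
      proof (cases "Suc T + 2 < k")
        case True
        then have "N k (Suc T) = 0" by (rule N_big)
        moreover have "bb k * real (Suc T) \<le> 1" using False by (intro bb_T[OF k4]) auto
        ultimately show ?thesis using bb_pos[of k] k by simp
      next
        case no: False
        then have T1': "T = 1" and k4': "k = 4" using False T1 by simp_all
        have r: "N 4 2 = N 4 1 + (real 3 * N 3 1 - real 4 * N 4 1 - NO 3 1 + NO 4 1) / (2 * real 1 + 1)"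
          using rec[of 4 1] by (simp add: numeral_eq_Suc)
        have N41: "N 4 1 = 0" by (rule N_big) simp
        have NO41: "NO 4 1 = 0" using NO_bounds[of 4 1] NO_le_N[of 4 1] N41 by simp
        have r': "N 4 2 = (12 - NO 3 1) / 3" using r N41 NO41 N_3_1 by simp
        have b4: "bb 4 = 1/5" by (simp add: bb_def)
        show ?thesis using r' b4 NO_bounds[of 3 1] T1' k4' by (simp add: abs_le_iff numeral_eq_Suc)
      qed
    qed
  qed
  then show ?case unfolding T_def .
qed

lemma final:
  shows "\<exists>b :: nat \<Rightarrow> real.
     (\<forall>k\<ge>3. (\<lambda>t. N k t / real t) \<longlonglongrightarrow> b k)
   \<and> b 3 = 2/5 \<and> b 4 = 1/5 \<and> b 5 = 4/35
   \<and> (\<forall>k\<ge>6. b k = 24 / (real k * (real k + 1) * (real k + 2)))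
   \<and> (\<forall>k\<ge>3. \<forall>t\<ge>1. \<bar>N k t - b k * real t\<bar> \<le> 3.6)"
proof (intro exI conjI allI impI)
  show bnd: "\<bar>N k t - bb k * real t\<bar> \<le> 3.6" if k3: "k \<ge> 3" and t1: "t \<ge> 1" for k t
  proof -
    obtain t' where "t = Suc t'" using t1 by (cases t) auto
    then show ?thesis using main_bound[of t'] k3 by simp
  qed
  show "bb 3 = 2/5" "bb 4 = 1/5" "bb 5 = 4/35" by (simp_all add: bb_def)
  show "bb k = 24 / (real k * (real k + 1) * (real k + 2))" for k by (simp add: bb_def)
  fix k :: nat assume k: "k \<ge> 3"
  have z: "(\<lambda>t. (N k t - bb k * real t) / real t) \<longlonglongrightarrow> 0"
  proof (rule Lim_null_comparison)
    show "\<forall>\<^sub>F t in sequentially. norm ((N k t - bb k * real t) / real t) \<le> 3.6 / real t"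
      using eventually_ge_at_top[of "1::nat"]
    proof (rule eventually_mono)
      fix t :: nat assume t: "1 \<le> t"
      have "\<bar>N k t - bb k * real t\<bar> \<le> 3.6" using bnd k t by blast
      then have "\<bar>N k t - bb k * real t\<bar> / real t \<le> 3.6 / real t"
        by (rule divide_right_mono) simp
      then show "norm ((N k t - bb k * real t) / real t) \<le> 3.6 / real t"
        by (simp only: real_norm_def abs_divide abs_of_nat)
    qed
    show "(\<lambda>t. 3.6 / real t) \<longlonglongrightarrow> 0" by (rule lim_const_over_n)
  qed
  then have "(\<lambda>t. bb k + (N k t - bb k * real t) / real t) \<longlonglongrightarrow> bb k + 0"
    by (intro tendsto_add tendsto_const)
  then have l: "(\<lambda>t. bb k + (N k t - bb k * real t) / real t) \<longlonglongrightarrow> bb k" by simp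
  show "(\<lambda>t. N k t / real t) \<longlonglongrightarrow> bb k"
  proof (rule Lim_transform_eventually[OF l])
    show "\<forall>\<^sub>F t in sequentially. bb k + (N k t - bb k * real t) / real t = N k t / real t"
      using eventually_ge_at_top[of "1::nat"]
      by (rule eventually_mono) (simp add: field_simps)
  qed
qed


theorem mainTheorem3:
  shows "\<exists>b :: nat \<Rightarrow> real.
     (\<forall>k\<ge>3. (\<lambda>t. N k t / real t) \<longlonglongrightarrow> b k)
   \<and> b 3 = 2/5 \<and> b 4 = 1/5 \<and> b 5 = 4/35
   \<and> (\<forall>k\<ge>6. b k = 24 / (real k * (real k + 1) * (real k + 2)))
   \<and> (\<forall>k\<ge>3. \<forall>t\<ge>1. \<bar>N k t - b k * real t\<bar> \<le> 3.6)"
  by (rule final)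

end
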